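(* Let $x$ be an integer with $0\le x\le p-1$ and $w$ a positive integer. Let $N_x$ be the least period of $(T_n^i(x)\bmod p)_{i\ge0}$ and $l_x$ the multiplicative order modulo $p$ of $T'_{n^{N_x}}(x)$. If $T_{n^{N_xl_x}}(x)\equiv x\pmod{p^w}$, then $T'_{n^{N_xl_x}}(x)\equiv 1\pmod{p^w}$ holds if and only if $n^{2\,\mathrm{ord}(n^2)}\equiv 1\pmod{p^w}$, where $\mathrm{ord}(n^2)$ is the multiplicative order of $n^2$ modulo $p$.
   Context: $p$ is a prime with $p>3$ and $n>1$ is an integer with $\gcd(n,p)=\gcd(n,p^2-1)=1$. $T_d(x)\in\mathbb{Z}[x]$ is the Chebyshev polynomial of the first kind: $T_0=1$, $T_1=x$, $T_d=2xT_{d-1}-T_{d-2}$; $T'_d$ is its derivative. $T_n^i$ is the $i$-fold composition of $T_n$ ($T_n^0(x)=x$), equal to $T_{n^i}$. The least period of $(T_n^i(x)\bmod p)_{i\ge0}$ is the least positive $N$ with $T_n^N(x)\equiv x\pmod p$. *)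

theory Defs
  imports "HOL-Number_Theory.Number_Theory" "HOL-Computational_Algebra.Polynomial"
begin

fun cheb :: "nat \<Rightarrow> int poly" where
  "cheb 0 = 1"
| "cheb (Suc 0) = [:0, 1:]"
| "cheb (Suc (Suc d)) = smult 2 ([:0, 1:] * cheb (Suc d)) - cheb d"

definition chebT :: "nat \<Rightarrow> int \<Rightarrow> int" where
  "chebT d x = poly (cheb d) x"

definition chebT' :: "nat \<Rightarrow> int \<Rightarrow> int" where
  "chebT' d x = poly (pderiv (cheb d)) x"

text \<open>Least period of (T_n^i(x) mod p), using T_n^i = T_{n^i}.\<close>
definition cheb_period :: "nat \<Rightarrow> nat \<Rightarrow> int \<Rightarrow> nat" where
  "cheb_period p n x = (LEAST N. N > 0 \<and> [chebT (n ^ N) x = x] (mod int p))"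

end

theory Submission
  imports Defs
begin

fun tt :: "int \<Rightarrow> nat \<Rightarrow> int" where
  "tt y 0 = 1"
| "tt y (Suc 0) = y"
| "tt y (Suc (Suc k)) = 2 * y * tt y (Suc k) - tt y k"

fun uu :: "int \<Rightarrow> nat \<Rightarrow> int" where
  "uu y 0 = 0"
| "uu y (Suc 0) = 1"
| "uu y (Suc (Suc k)) = 2 * y * uu y (Suc k) - uu y k"

lemma alg_step1: "(2::int) * y * (y * t1 + (y^2-1) * u1) - t1 = y * (y * t1 + (y^2-1) * u1) + (y^2-1) * (t1 + y * u1)"
  by (simp add: algebra_simps power2_eq_square)
lemma alg_step2: "(2::int) * y * (t1 + y * u1) - u1 = (y * t1 + (y^2-1) * u1) + y * (t1 + y * u1)"
  by (simp add: algebra_simps power2_eq_square)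
lemma alg_dbl: "(tb::int)^2 - (y^2 - 1) * ub^2 = 1 \<Longrightarrow>
     (tc * tb + (y^2 - 1) * uc * ub) * tb +
     (y^2 - 1) * (tc * ub + uc * tb) * ub =
     2 * (tc * tb + (y^2 - 1) * uc * ub) * tb - tc"
proof -
  assume h: "(tb::int)^2 - (y^2 - 1) * ub^2 = 1"
  have "(tc * tb + (y^2 - 1) * uc * ub) * tb +
     (y^2 - 1) * (tc * ub + uc * tb) * ub - (2 * (tc * tb + (y^2 - 1) * uc * ub) * tb - tc) = tc * (1 - (tb^2 - (y^2 - 1) * ub^2))"
    by (simp add: algebra_simps power2_eq_square)
  then show ?thesis using h by simp
qed

lemma tt_uu_Suc:
  "tt y (Suc a) = y * tt y a + (y^2 - 1) * uu y a \<and> uu y (Suc a) = tt y a + y * uu y a"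
proof (induction a rule: less_induct)
  case (less a)
  show ?case
  proof (cases a)
    case 0 then show ?thesis by simp
  next
    case (Suc b)
    show ?thesis
    proof (cases b)
      case 0 then show ?thesis using Suc by (simp add: power2_eq_square algebra_simps)
    next
      case (Suc c)
      have lt: "Suc c < a" using \<open>a = Suc b\<close> Suc by simp
      have h2: "tt y (Suc (Suc c)) = y * tt y (Suc c) + (y^2 - 1) * uu y (Suc c)" "uu y (Suc (Suc c)) = tt y (Suc c) + y * uu y (Suc c)"
        using less[OF lt] by blast+
      have "tt y (Suc a) = 2 * y * tt y (Suc (Suc c)) - tt y (Suc c)"
           "uu y (Suc a) = 2 * y * uu y (Suc (Suc c)) - uu y (Suc c)"
        using \<open>a = Suc b\<close> Suc by simp_all
      then show ?thesis using h2 \<open>a = Suc b\<close> Suc alg_step1 alg_step2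
        by (simp only:)
    qed
  qed
qed

lemma tt_Suc: "tt y (Suc a) = y * tt y a + (y^2 - 1) * uu y a"
  using tt_uu_Suc by blast
lemma uu_Suc: "uu y (Suc a) = tt y a + y * uu y a"
  using tt_uu_Suc by blast

lemma pell: "tt y a ^ 2 - (y^2 - 1) * uu y a ^ 2 = 1"
proof (induction a)
  case 0 then show ?case by simp
next
  case (Suc a)
  have "tt y (Suc a) ^ 2 - (y^2 - 1) * uu y (Suc a) ^ 2 = (tt y a ^ 2 - (y^2 - 1) * uu y a ^ 2)"
    unfolding tt_Suc uu_Suc by (simp add: algebra_simps power2_eq_square)
  then show ?case using Suc by simp
qed

lemma add_formula:
  "tt y (a + b) = tt y a * tt y b + (y^2 - 1) * uu y a * uu y b \<and>
   uu y (a + b) = tt y a * uu y b + uu y a * tt y b"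
proof (induction b)
  case 0 then show ?case by simp
next
  case (Suc b)
  have "tt y (a + Suc b) = y * tt y (a+b) + (y^2 - 1) * uu y (a+b)"
       "uu y (a + Suc b) = tt y (a+b) + y * uu y (a+b)"
    using tt_Suc uu_Suc by simp_all
  then show ?case using Suc unfolding tt_Suc uu_Suc
    by (simp add: algebra_simps)
qed

lemma tt_add: "tt y (a + b) = tt y a * tt y b + (y^2 - 1) * uu y a * uu y b"
  using add_formula by blast
lemma uu_add: "uu y (a + b) = tt y a * uu y b + uu y a * tt y b"
  using add_formula by blast

lemma tt_double_step: "tt y (c + 2 * b) = 2 * tt y (c + b) * tt y b - tt y c"
proof -
  have e: "c + 2 * b = (c + b) + b" by simp
  have "tt y (c + 2*b) = tt y (c+b) * tt y b + (y^2-1) * uu y (c+b) * uu y b"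
    by (simp only: e tt_add)
  also have "\<dots> = 2 * tt y (c + b) * tt y b - tt y c"
    unfolding tt_add uu_add using alg_dbl[OF pell[of y b]] by simp
  finally show ?thesis .
qed

lemma tt_mult: "tt y (a * b) = tt (tt y b) a"
proof (induction a rule: less_induct)
  case (less a)
  show ?case
  proof (cases a)
    case 0 then show ?thesis by simp
  next
    case (Suc a1)
    show ?thesis
    proof (cases a1)
      case 0 then show ?thesis using Suc by simp
    next
      case (Suc c)
      have e: "a * b = c * b + 2 * b" using \<open>a = Suc a1\<close> Suc by (simp add: algebra_simps)
      have e2: "c * b + b = Suc c * b" by simp
      have "tt y (a * b) = 2 * tt y (Suc c * b) * tt y b - tt y (c * b)"
        by (simp only: e tt_double_step e2)
      also have "\<dots> = tt (tt y b) a"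
        using less[of "Suc c"] less[of c] \<open>a = Suc a1\<close> Suc by simp
      finally show ?thesis .
    qed
  qed
qed

lemma chebT_tt: "chebT k y = tt y k"
  unfolding chebT_def
  by (induction k rule: cheb.induct) (simp_all add: algebra_simps)

lemma tt_from_uu: "tt y (Suc k) = y * uu y (Suc k) - uu y k"
  unfolding tt_Suc uu_Suc by (simp add: algebra_simps power2_eq_square)

lemma chebT'_uu: "chebT' k y = int k * uu y k"
  unfolding chebT'_def
proof (induction k rule: cheb.induct)
  case 1 then show ?case by simp
next
  case 2 then show ?case by (simp add: pderiv_pCons)
next
  case (3 d)
  have "poly (pderiv (cheb (Suc (Suc d)))) y
     = 2 * poly (cheb (Suc d)) y + 2 * y * poly (pderiv (cheb (Suc d))) y - poly (pderiv (cheb d)) y"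
    by (simp add: pderiv_mult pderiv_diff pderiv_smult pderiv_pCons algebra_simps)
  also have "\<dots> = 2 * tt y (Suc d) + 2 * y * (int (Suc d) * uu y (Suc d)) - int d * uu y d"
    using 3 chebT_tt[unfolded chebT_def] by simp
  also have "\<dots> = int (Suc (Suc d)) * uu y (Suc (Suc d))"
    by (simp add: tt_from_uu algebra_simps)
  finally show ?case .
qed

lemma cheb_mult: "cheb (a * b) = pcompose (cheb a) (cheb b)"
proof -
  have "poly (cheb (a * b)) = poly (pcompose (cheb a) (cheb b))"
    by (rule ext) (simp add: poly_pcompose chebT_tt[unfolded chebT_def] tt_mult)
  then show ?thesis by (simp add: poly_eq_poly_eq_iff)
qed

lemma chain: "chebT' (a * b) y = chebT' a (chebT b y) * chebT' b y"
  unfolding chebT'_def chebT_def cheb_mult pderiv_pcompose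
  by (simp add: poly_pcompose)

lemma uu_mult: "uu y (a * b) = uu (tt y b) a * uu y b"
proof (cases "a = 0 \<or> b = 0")
  case True then show ?thesis by auto
next
  case False
  have "int (a * b) * uu y (a * b) = (int a * uu (tt y b) a) * (int b * uu y b)"
    using chain[of a b y] by (simp add: chebT'_uu chebT_tt)
  then have "int (a * b) * uu y (a * b) = int (a * b) * (uu (tt y b) a * uu y b)"
    by (simp add: algebra_simps)
  then show ?thesis using False by simp
qed

lemma tt_uu_cong_aux:
  assumes "[y = y'] (mod M)"
  shows "[tt y k = tt y' k] (mod M) \<and> [tt y (Suc k) = tt y' (Suc k)] (mod M) \<and>
         [uu y k = uu y' k] (mod M) \<and> [uu y (Suc k) = uu y' (Suc k)] (mod M)"
proof (induction k)
  case 0 then show ?case using assms by simp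
next
  case (Suc k)
  have "[2 * y * tt y (Suc k) - tt y k = 2 * y' * tt y' (Suc k) - tt y' k] (mod M)"
    using Suc assms by (intro cong_diff cong_mult cong_refl) auto
  moreover have "[2 * y * uu y (Suc k) - uu y k = 2 * y' * uu y' (Suc k) - uu y' k] (mod M)"
    using Suc assms by (intro cong_diff cong_mult cong_refl) auto
  ultimately show ?case using Suc by simp
qed

lemma tt_cong: "[y = y'] (mod M) \<Longrightarrow> [tt y k = tt y' k] (mod M)"
  using tt_uu_cong_aux by blast
lemma uu_cong: "[y = y'] (mod M) \<Longrightarrow> [uu y k = uu y' k] (mod M)"
  using tt_uu_cong_aux by blast

lemma tt_uu_one: "tt 1 k = 1 \<and> uu 1 k = int k"
  by (induction k) (simp_all add: tt_Suc uu_Suc)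

lemma tt_uu_neg: "tt (-y) k = (-1)^k * tt y k \<and> uu (-y) k = (-1)^(Suc k) * uu y k"
  by (induction k) (simp_all add: tt_Suc uu_Suc algebra_simps)

lemma uu_taylor: "\<exists>c. 3 * uu (1 + h) k = 3 * int k + h * (int k ^ 3 - int k) + h^2 * c"
proof -
  have "(\<exists>c. 3 * uu (1 + h) k = 3 * int k + h * (int k ^ 3 - int k) + h^2 * c) \<and>
        (\<exists>c. 3 * uu (1 + h) (Suc k) = 3 * int (Suc k) + h * (int (Suc k) ^ 3 - int (Suc k)) + h^2 * c)"
  proof (induction k)
    case 0 then show ?case by simp
  next
    case (Suc k)
    then obtain c0 c1 where c0: "3 * uu (1 + h) k = 3 * int k + h * (int k ^ 3 - int k) + h^2 * c0"
      and c1: "3 * uu (1 + h) (Suc k) = 3 * int (Suc k) + h * (int (Suc k) ^ 3 - int (Suc k)) + h^2 * c1"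
      by blast
    have "3 * uu (1 + h) (Suc (Suc k)) = 2 * (1 + h) * (3 * uu (1 + h) (Suc k)) - 3 * uu (1+h) k"
      by simp
    also have "\<dots> = 3 * int (Suc (Suc k)) + h * (int (Suc (Suc k)) ^ 3 - int (Suc (Suc k))) + h^2 * (2 * (int (Suc k) ^ 3 - int (Suc k)) + 2 * (1 + h) * c1 - c0)"
      unfolding c0 c1 by (simp add: algebra_simps power2_eq_square power3_eq_cube)
    finally show ?case using c1 by blast
  qed
  then show ?thesis by blast
qed

lemma lemmaP:
  assumes p: "prime p" "p > 3" and y: "[y = 1] (mod int p)"
  shows "(int p)^2 dvd uu y p - int p"
proof -
  define h where "h = y - 1"
  have hp: "int p dvd h" using y unfolding h_def by (simp add: cong_iff_dvd_diff)
  obtain c where c: "3 * uu (1 + h) p = 3 * int p + h * (int p ^ 3 - int p) + h^2 * c"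
    using uu_taylor by blast
  have yh: "y = 1 + h" unfolding h_def by simp
  have eq: "3 * (uu y p - int p) = h * int p * (int p ^ 2 - 1) + h^2 * c"
    using c unfolding yh by (simp add: algebra_simps power2_eq_square power3_eq_cube)
  have "(int p)^2 dvd h * int p * (int p ^ 2 - 1)"
    using hp by (simp add: power2_eq_square mult_dvd_mono)
  moreover have "(int p)^2 dvd h^2 * c" using hp by (simp add: dvd_mult2)
  ultimately have "(int p)^2 dvd 3 * (uu y p - int p)" unfolding eq by simp
  moreover have "coprime ((int p)^2) 3"
  proof -
    have "coprime (int p) 3"
    proof (rule ccontr)
      assume "\<not> coprime (int p) 3"
      then have "int p dvd 3" using p prime_int_iff[of "int p"]
        by (metis prime_imp_coprime_int prime_nat_int_transfer)
      then have "p dvd 3" by presburger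
      then show False using p by (simp add: dvd_imp_le leD)
    qed
    then show ?thesis by simp
  qed
  ultimately show ?thesis using coprime_dvd_mult_right_iff by blast
qed

lemma claimC:
  assumes p: "prime p" "p > 3"
  shows "[y = 1] (mod int p) \<Longrightarrow> (int p)^e dvd int j \<Longrightarrow> (int p)^(Suc e) dvd uu y j - int j"
proof (induction e arbitrary: y j)
  case 0
  have "[uu y j = uu 1 j] (mod int p)" using uu_cong[OF 0(1)] .
  then show ?case by (simp add: tt_uu_one cong_iff_dvd_diff)
next
  case (Suc e)
  from Suc.prems(2) obtain g where g: "int j = (int p)^(Suc e) * g" by (auto elim: dvdE)
  have "int p dvd int j" using g by simp
  then obtain j' where j': "j = p * j'" by (auto elim: dvdE simp: int_dvd_int_iff)
  have gj: "int j' = (int p)^e * g" using g j' p by (simp add: prime_gt_0_nat)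
  then have "(int p)^e dvd int j'" by simp
  from Suc.IH[OF Suc.prems(1) this] obtain c where c: "uu y j' - int j' = (int p)^(Suc e) * c"
    by (auto elim: dvdE)
  have "[tt y j' = tt 1 j'] (mod int p)" using tt_cong[OF Suc.prems(1)] .
  then have "[tt y j' = 1] (mod int p)" by (simp add: tt_uu_one)
  from lemmaP[OF p this] obtain d where d: "uu (tt y j') p - int p = (int p)^2 * d"
    by (auto elim: dvdE)
  have "uu y j = uu (tt y j') p * uu y j'" unfolding j' by (rule uu_mult)
  also have "\<dots> = (int p + (int p)^2 * d) * (int j' + (int p)^(Suc e) * c)"
    using c d by (simp add: algebra_simps)
  finally have "uu y j - int j = (int p)^(Suc (Suc e)) * (d * g + c + int p * d * c)"
    unfolding j' using gj by (simp add: algebra_simps power2_eq_square)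
  then show ?case by simp
qed

lemma fresh:
  fixes x y :: "'a::comm_ring_1"
  assumes p: "prime p"
  shows "\<exists>c. (x + y)^p = x^p + y^p + of_nat p * c"
proof -
  let ?f = "\<lambda>k. of_nat (p choose k) * x ^ k * y ^ (p - k)"
  let ?R = "{..p} - {0, p}"
  define c where "c = (\<Sum>k\<in>?R. of_nat ((p choose k) div p) * x ^ k * y ^ (p - k))"
  have "of_nat p * c = (\<Sum>k\<in>?R. ?f k)"
    unfolding c_def sum_distrib_left
  proof (rule sum.cong)
    fix k assume "k \<in> ?R"
    then have k: "k > 0" "k < p" by auto
    have "p dvd (p choose k)" using dvd_choose_prime[OF k(2)] k p by auto
    then have "p * ((p choose k) div p) = p choose k" by simp
    then have "(of_nat p :: 'a) * of_nat ((p choose k) div p) = of_nat (p choose k)"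
      by (metis of_nat_mult)
    then show "of_nat p * (of_nat ((p choose k) div p) * x ^ k * y ^ (p - k)) = ?f k"
      by (simp add: mult.assoc[symmetric])
  qed simp
  have p0: "p > 0" using p prime_gt_0_nat by blast
  have "(x + y)^p = (\<Sum>k\<le>p. ?f k)" by (rule binomial_ring)
  also have "\<dots> = (\<Sum>k\<in>?R. ?f k) + (\<Sum>k\<in>{0,p}. ?f k)"
    by (rule sum.subset_diff) auto
  also have "(\<Sum>k\<in>{0,p}. ?f k) = x^p + y^p" using p0 by (simp add: add.commute)
  finally show ?thesis using \<open>of_nat p * c = _\<close> by (metis add.commute)
qed

lemma pow_split:
  fixes q c :: "'a::comm_ring_1"
  shows "\<exists>B. (q + c)^h = q * B + c^h"
proof (induction h)
  case 0 then show ?case by (rule exI[of _ 0]) simp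
next
  case (Suc h)
  then obtain B where B: "(q + c)^h = q * B + c^h" by blast
  have "(q + c)^Suc h = (q + c) * (q + c)^h" by simp
  also have "\<dots> = q * (B * (q + c) + c^h) + c^Suc h"
    unfolding B by (simp add: algebra_simps)
  finally have "(q + c)^Suc h = q * (B * (q + c) + c^h) + c^Suc h" .
  then show ?case by blast
qed

definition QQ :: "int \<Rightarrow> int poly" where "QQ y = [:-(y^2-1), 0, 1:]"

lemma lemmaR: "\<exists>A. [:y,1:]^k = QQ y * A + [:tt y k, uu y k:]"
proof (induction k)
  case 0 then show ?case by (rule exI[of _ 0]) (simp add: one_pCons)
next
  case (Suc k)
  then obtain A where A: "[:y,1:]^k = QQ y * A + [:tt y k, uu y k:]" by blast
  have "[:y,1:]^Suc k = QQ y * ([:y,1:] * A + [:uu y k:]) + [:tt y (Suc k), uu y (Suc k):]"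
  proof -
    have "poly ([:y,1:]^Suc k) = poly (QQ y * ([:y,1:] * A + [:uu y k:]) + [:tt y (Suc k), uu y (Suc k):])"
      by (rule ext) (simp add: A QQ_def tt_Suc uu_Suc algebra_simps power2_eq_square)
    then show ?thesis by (simp add: poly_eq_poly_eq_iff)
  qed
  then show ?case by blast
qed

lemma lemmaS: "\<exists>F c0 c1. G = QQ y * F + [:c0, c1:]"
proof (induction G)
  case (pCons a G)
  then obtain F c0 c1 where F: "G = QQ y * F + [:c0, c1:]" by blast
  have "pCons a G = QQ y * ([:0,1:] * F + [:c1:]) + [:a + (y^2-1) * c1, c0:]"
  proof -
    have "poly (pCons a G) = poly (QQ y * ([:0,1:] * F + [:c1:]) + [:a + (y^2-1) * c1, c0:])"
      by (rule ext) (simp add: F QQ_def algebra_simps power2_eq_square)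
    then show ?thesis by (simp add: poly_eq_poly_eq_iff)
  qed
  then show ?case by blast
next
  case 0
  have "(0::int poly) = QQ y * 0 + [:0, 0:]" by simp
  then show ?case by blast
qed

lemma lemmaU:
  assumes "QQ y * F = [:a, b:]"
  shows "a = 0 \<and> b = 0"
proof (cases "F = 0")
  case True then show ?thesis using assms by simp
next
  case False
  have "QQ y \<noteq> 0" by (simp add: QQ_def)
  then have "degree (QQ y * F) = degree (QQ y) + degree F" using False by (rule degree_mult_eq)
  moreover have "degree (QQ y) = 2" by (simp add: QQ_def)
  moreover have "degree [:a, b:] \<le> 1" by simp
  ultimately show ?thesis using assms by simp
qed

lemma ring_rearr:
  fixes Q A T Y X B Z k F W :: "'a::comm_ring_1"
  assumes "Q * A + T = Y + (Q * (X * B) + Z) + k * (Q * F + W)"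
  shows "Q * (A - X * B - k * F) = Y + Z + k * W - T"
  using assms by (simp add: algebra_simps)

lemma frob:
  assumes p: "prime p" "odd p"
  shows "[tt y p = y^p] (mod int p) \<and> [uu y p = (y^2-1)^((p-1) div 2)] (mod int p)"
proof -
  define h where "h = (p - 1) div 2"
  have ph: "p = Suc (2 * h)" using p(2) unfolding h_def by presburger
  obtain A where A: "[:y,1:]^p = QQ y * A + [:tt y p, uu y p:]" using lemmaR by blast
  obtain E where E: "([:y:] + [:0,1:])^p = [:y:]^p + [:0,1:]^p + of_nat p * E"
    using fresh[OF p(1)] by blast
  obtain B where B: "(QQ y + [:y^2-1:])^h = QQ y * B + [:y^2-1:]^h" using pow_split by blast
  have X2: "[:0,1:]^2 = QQ y + [:y^2 - 1:]" by (simp add: QQ_def power2_eq_square)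
  have "[:0,1::int:]^p = [:0,1:] * ([:0,1:]^2)^h" unfolding ph by (simp only: power_mult power_Suc)
  also have "\<dots> = [:0,1:] * (QQ y * B + [:(y^2-1)^h:])"
    unfolding X2 B by (simp only: poly_const_pow)
  also have "\<dots> = QQ y * ([:0,1:] * B) + [:0, (y^2-1)^h:]"
    by (simp add: algebra_simps)
  finally have Xp: "[:0,1::int:]^p = QQ y * ([:0,1:] * B) + [:0, (y^2-1)^h:]" .
  obtain F e0 e1 where F: "E = QQ y * F + [:e0, e1:]" using lemmaS by blast
  have yy: "[:y:] + [:0,1:] = [:y, 1:]" by simp
  have E2: "[:y,1:]^p = [:y^p:] + [:0,1:]^p + of_nat p * E"
    using E unfolding yy by (simp only: poly_const_pow)
  have "QQ y * A + [:tt y p, uu y p:] = [:y^p:] + (QQ y * ([:0,1:] * B) + [:0, (y^2-1)^h:]) + of_nat p * (QQ y * F + [:e0, e1:])"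
    using E2 unfolding A Xp F .
  from ring_rearr[OF this] have "QQ y * (A - [:0,1:] * B - of_nat p * F) = [:y^p:] + [:0, (y^2-1)^h:] + of_nat p * [:e0, e1:] - [:tt y p, uu y p:]" .
  also have "\<dots> = [:y^p + int p * e0 - tt y p, (y^2-1)^h + int p * e1 - uu y p:]"
    by (simp add: of_nat_poly)
  finally have "QQ y * (A - [:0,1:] * B - of_nat p * F) = [:y^p + int p * e0 - tt y p, (y^2-1)^h + int p * e1 - uu y p:]" .
  from lemmaU[OF this] have "tt y p = y^p + int p * e0" "uu y p = (y^2-1)^h + int p * e1" by simp_all
  then show ?thesis unfolding h_def[symmetric]
    by (simp add: cong_iff_dvd_diff)
qed

lemma ident:
  "tt y (2*k+1) - y = 2 * (y^2-1) * uu y (k+1) * uu y k \<and>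
   uu y (2*k+1) = uu y (k+1)^2 - uu y k^2 \<and>
   uu y (k+1)^2 - 2 * y * uu y (k+1) * uu y k + uu y k^2 = 1"
proof -
  define t where "t = tt y k"
  define u where "u = uu y k"
  have P: "t^2 - (y^2-1) * u^2 = 1" unfolding t_def u_def by (rule pell)
  have e: "2*k+1 = Suc k + k" by simp
  have a: "uu y (k+1) = t + y * u" "tt y (k+1) = y * t + (y^2-1) * u"
    unfolding t_def u_def using tt_Suc uu_Suc by simp_all
  have b: "tt y (2*k+1) = (y * t + (y^2-1) * u) * t + (y^2-1) * (t + y * u) * u"
    unfolding e tt_add using a by (simp add: t_def u_def)
  have c: "uu y (2*k+1) = (y * t + (y^2-1) * u) * u + (t + y * u) * t"
    unfolding e uu_add using a by (simp add: t_def u_def)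
  have 1: "tt y (2*k+1) - y = 2 * (y^2-1) * uu y (k+1) * uu y k"
  proof -
    have "tt y (2*k+1) - y - 2 * (y^2-1) * uu y (k+1) * uu y k = y * (t^2 - (y^2-1) * u^2 - 1)"
      unfolding b a(1) u_def[symmetric] by (simp add: algebra_simps power2_eq_square)
    then show ?thesis using P by simp
  qed
  have 2: "uu y (2*k+1) = uu y (k+1)^2 - uu y k^2"
    unfolding c a(1) u_def[symmetric] by (simp add: algebra_simps power2_eq_square)
  have 3: "uu y (k+1)^2 - 2 * y * uu y (k+1) * uu y k + uu y k^2 = t^2 - (y^2-1) * u^2"
    unfolding a(1) u_def[symmetric] by (simp add: algebra_simps power2_eq_square)
  show ?thesis using 1 2 3 P by simp
qed

lemma dvd_cancel_P:
  fixes P X :: int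
  assumes "P \<noteq> 0" "w > 0" "P^w dvd P * X"
  shows "P^(w-1) dvd X"
proof -
  have "P^w = P * P^(w-1)" using assms(2) by (cases w) auto
  then have "P * P^(w-1) dvd P * X" using assms(3) by simp
  then show ?thesis using assms(1) by (metis dvd_mult_cancel_left)
qed

lemma fin_aux:
  fixes P b c q m E c' :: int
  assumes pr: "prime P" "\<not> P dvd 4" and w: "w \<ge> 2"
    and b: "P^(w-1) dvd b" and bc: "P^w dvd b - c" and q: "P dvd q - 1"
    and E: "E = 2*c + 2*q*b - 2*m*b^2" and c': "coprime c' P"
  shows "P^w dvd E \<longleftrightarrow> P^w dvd 4 * c * c'"
proof -
  have b2: "P^w dvd b^2"
  proof -
    have "P^(w-1) * P^(w-1) dvd b * b" using mult_dvd_mono[OF b b] .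
    moreover have "P^w dvd P^(w-1) * P^(w-1)"
      unfolding power_add[symmetric] using w by (intro le_imp_power_dvd) simp
    ultimately show ?thesis by (simp add: power2_eq_square dvd_trans)
  qed
  have bq: "P^w dvd b * (q - 1)"
  proof -
    have "P^(w-1) * P dvd b * (q - 1)" using mult_dvd_mono[OF b q] .
    moreover have "P^(w-1) * P = P^(Suc (w-1))" by (simp only: power_Suc2)
    moreover have "Suc (w-1) = w" using w by simp
    ultimately show ?thesis by simp
  qed
  have eqE: "E - 4 * c = 2 * (b - c) + 2 * (b * (q - 1)) - 2 * m * b^2" unfolding E by (simp add: algebra_simps)
  have dX: "P^w dvd 2 * (b - c) + 2 * (b * (q - 1)) - 2 * m * b^2"
  proof -
    have "P^w dvd 2 * (b - c)" using bc by (rule dvd_mult)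
    moreover have "P^w dvd 2 * (b * (q - 1))" using bq by (rule dvd_mult)
    moreover have "P^w dvd 2 * m * b^2" using b2 by (rule dvd_mult)
    ultimately show ?thesis by (intro dvd_diff dvd_add)
  qed
  have d: "P^w dvd E - 4 * c" unfolding eqE by (rule dX)
  have "P^w dvd (E - 4 * c) + 4 * c \<longleftrightarrow> P^w dvd 4 * c" by (rule dvd_add_right_iff[OF d])
  then have 1: "P^w dvd E \<longleftrightarrow> P^w dvd 4 * c" by simp
  have c4: "coprime (P^w) 4"
  proof -
    have "coprime 4 P" using pr by (metis prime_imp_coprime coprime_commute)
    then show ?thesis by (simp add: coprime_commute)
  qed
  have cc: "coprime (P^w) c'" using c' by (simp add: coprime_commute)
  have 2: "P^w dvd 4 * c \<longleftrightarrow> P^w dvd c" using coprime_dvd_mult_right_iff[OF c4] .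
  have 3: "P^w dvd 4 * c * c' \<longleftrightarrow> P^w dvd c * c'" using coprime_dvd_mult_right_iff[OF c4, of "c * c'"] by (simp add: mult.assoc)
  have 4: "P^w dvd c * c' \<longleftrightarrow> P^w dvd c" using coprime_dvd_mult_left_iff[OF cc] .
  show ?thesis using 1 2 3 4 by simp
qed

lemma cpP: "prime (P::int) \<Longrightarrow> \<not> P dvd c \<Longrightarrow> coprime c P"
  by (metis prime_imp_coprime coprime_commute)

lemma kdiv:
  assumes p: "prime p" "p > 3" and y: "[y = 1] (mod int p)"
    and E: "(int p)^E dvd uu y k"
  shows "e \<le> E \<Longrightarrow> (int p)^e dvd int k"
proof (induction e)
  case 0 then show ?case by simp
next
  case (Suc e)
  then have ih: "(int p)^e dvd int k" by simp
  have "(int p)^(Suc e) dvd uu y k - int k" using claimC[OF p y ih] .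
  moreover have "(int p)^(Suc e) dvd uu y k"
    using dvd_trans[OF le_imp_power_dvd[OF Suc.prems] E] .
  ultimately have "(int p)^(Suc e) dvd uu y k - (uu y k - int k)" by (rule dvd_diff[rotated])
  then show ?case by simp
qed

lemma P_facts:
  assumes p: "prime p" "p > 3"
  shows "prime (int p)" "odd (int p)" "\<not> int p dvd 2" "\<not> int p dvd 4" "int p \<noteq> 0"
proof -
  show "prime (int p)" using p by simp
  have "odd p" using p by (intro prime_odd_nat) auto
  then show "odd (int p)" by simp
  show "\<not> int p dvd 2"
  proof
    assume "int p dvd 2" then have "p dvd 2" by presburger
    then show False using p by (auto dest: dvd_imp_le)
  qed
  show "\<not> int p dvd 4"
  proof
    assume "int p dvd 4" then have d4: "p dvd 4" by presburger
    then have "p \<le> 4" by (rule dvd_imp_le) simp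
    then have p4: "p = 4" using p by simp
    have "(2::nat) dvd p" unfolding p4 by simp
    then have "2 = (1::nat) \<or> 2 = p" using p(1) unfolding prime_nat_iff by blast
    then show False using p by simp
  qed
  show "int p \<noteq> 0" using p by simp
qed

lemma negy:
  assumes p: "prime p" "p > 3" and m: "odd m" and w: "w > 0"
    and y: "y = 1 - int p"
    and hyp: "[tt y m = y] (mod (int p)^w)"
    and d1: "[int m * uu y m = 1] (mod int p)"
  shows "[int m * uu y m = 1] (mod (int p)^w) \<longleftrightarrow> [int m ^ 2 = 1] (mod (int p)^w)"
proof -
  define P where "P = int p"
  note PF = P_facts[OF p, folded P_def]
  have y1: "[y = 1] (mod P)" unfolding y P_def by (simp add: cong_iff_dvd_diff)
  have "P dvd uu y m - int m" using claimC[OF p, of y 0 m] y1 P_def by simp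
  then have "[int m * uu y m = int m * int m] (mod P)"
    by (simp add: cong_iff_dvd_diff right_diff_distrib[symmetric])
  then have m2p: "[int m ^ 2 = 1] (mod P)" using d1 unfolding P_def
    by (metis cong_sym cong_trans power2_eq_square)
  show ?thesis
  proof (cases "w = 1")
    case True then show ?thesis using d1 m2p P_def by simp
  next
    case False
    with w have w2: "w \<ge> 2" by simp
    obtain k where k: "m = 2 * k + 1" using m by (auto elim: oddE)
    define a where "a = uu y (k+1)"
    define b where "b = uu y k"
    have I: "tt y m - y = 2 * (y^2-1) * a * b" "uu y m = a^2 - b^2" "a^2 - 2 * y * a * b + b^2 = 1"
      using ident[of y k] unfolding k a_def b_def by auto
    have m21: "int m ^ 2 - 1 = 4 * int k * (int k + 1)" unfolding k by (simp add: algebra_simps power2_eq_square)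
    have D: "y^2 - 1 = P * (P - 2)" unfolding y P_def by (simp add: algebra_simps power2_eq_square)
    have "P^w dvd P * (2 * (P - 2) * a * b)"
      using hyp I(1) D unfolding P_def[symmetric] by (simp add: cong_iff_dvd_diff algebra_simps)
    then have hab: "P^(w-1) dvd 2 * (P - 2) * a * b" using dvd_cancel_P PF(5) w by blast
    have P2: "coprime (2 * (P - 2)) P"
    proof -
      have "[P - 2 = -2] (mod P)" by (simp add: cong_iff_dvd_diff)
      moreover have "coprime (-2) P" using cpP[OF PF(1), of "-2"] PF(3) by simp
      ultimately have c1: "coprime (P-2) P" using cong_imp_coprime cong_sym by blast
      have c2: "coprime 2 P" using cpP[OF PF(1) PF(3)] .
      show ?thesis using c1 c2 by (simp only: coprime_mult_left_iff)
    qed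
    have ca: "P dvd a - int (k+1)" using claimC[OF p, of y 0 "k+1"] y1 P_def a_def by simp
    have cb: "P dvd b - int k" using claimC[OF p, of y 0 k] y1 P_def b_def by simp
    have "P dvd int m ^ 2 - 1" using m2p by (simp add: cong_iff_dvd_diff)
    then have "P dvd 4 * (int k * (int k + 1))" unfolding m21 by (simp add: mult.assoc)
    then have "P dvd int k * (int k + 1)" using PF(1) PF(4) prime_dvd_mult_iff by blast
    then have kcases: "P dvd int k \<or> P dvd int k + 1" using PF(1) prime_dvd_mult_iff by blast
    have Ew: "[int m * uu y m = 1] (mod P^w) \<longleftrightarrow> P^w dvd int m * uu y m - 1"
      by (simp add: cong_iff_dvd_diff)
    have Rw: "[int m ^ 2 = 1] (mod P^w) \<longleftrightarrow> P^w dvd 4 * int k * (int k + 1)"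
      by (simp add: cong_iff_dvd_diff m21)
    from kcases show ?thesis
    proof
      assume Pk: "P dvd int k"
      have "a - 1 = (a - int (k+1)) + int k" by simp
      moreover have "P dvd (a - int (k+1)) + int k" using ca Pk by (rule dvd_add)
      ultimately have "P dvd a - 1" by simp
      then have "[1 = a] (mod P)" by (simp add: cong_iff_dvd_diff dvd_diff_commute)
      then have "coprime a P" using cong_imp_coprime[of 1 a P] by simp
      then have "coprime (2 * (P - 2) * a) P" using P2 by simp
      then have "coprime (P^(w-1)) (2 * (P - 2) * a)" by (simp add: coprime_commute)
      from coprime_dvd_mult_right_iff[OF this, of b] hab have bdv: "P^(w-1) dvd b" by simp
      have "P^(w-1) dvd int k" using kdiv[OF p, of y "w-1" k "w-1"] y1 bdv P_def b_def by simp
      then have bk: "P^w dvd b - int k" using claimC[OF p, of y "w-1" k] y1 P_def b_def w by simp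
      have q: "P dvd int m * y * a - 1"
      proof -
        have "[int m * y * a = 1 * 1 * 1] (mod P)"
        proof (intro cong_mult)
          show "[int m = 1] (mod P)" using Pk unfolding k by (simp add: cong_iff_dvd_diff)
          show "[y = 1] (mod P)" by (rule y1)
          show "[a = 1] (mod P)" using \<open>P dvd a - 1\<close> by (simp add: cong_iff_dvd_diff)
        qed
        then show ?thesis by (simp add: cong_iff_dvd_diff)
      qed
      have E: "int m * uu y m - 1 = 2 * int k + 2 * (int m * y * a) * b - 2 * int m * b^2"
      proof -
        have asq: "a^2 = 1 + 2 * y * a * b - b^2" using I(3) by simp
        have mi: "int m = 2 * int k + 1" using k by simp
        have "int m * uu y m - 1 = int m * (a^2 - b^2) - 1" using I(2) by simp
        also have "\<dots> = int m * ((1 + 2 * y * a * b - b^2) - b^2) - 1" using asq by simp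
        also have "\<dots> = 2 * int k + 2 * (int m * y * a) * b - 2 * int m * b^2"
          by (simp add: mi algebra_simps power2_eq_square)
        finally show ?thesis .
      qed
      have "coprime (int k + 1) P"
      proof -
        have "[1 = int k + 1] (mod P)" using Pk by (simp add: cong_iff_dvd_diff dvd_diff_commute)
        then show ?thesis using cong_imp_coprime[of 1 "int k + 1" P] by simp
      qed
      from fin_aux[OF PF(1) PF(4) w2 bdv bk q E this] show ?thesis using Ew Rw by (simp add: P_def)
    next
      assume Pk: "P dvd int k + 1"
      have "b + 1 = (b - int k) + (int k + 1)" by simp
      moreover have "P dvd (b - int k) + (int k + 1)" using cb Pk by (rule dvd_add)
      ultimately have "P dvd b + 1" by simp
      then have "coprime b P"
      proof -
        have "[b = -1] (mod P)" using \<open>P dvd b + 1\<close> by (simp add: cong_iff_dvd_diff)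
        moreover have "coprime (-1) P" by simp
        ultimately show ?thesis using cong_imp_coprime cong_sym by blast
      qed
      then have "coprime (2 * (P - 2) * b) P" using P2 by simp
      then have "coprime (P^(w-1)) (2 * (P - 2) * b)" by (simp add: coprime_commute)
      moreover have "2 * (P - 2) * a * b = (2 * (P - 2) * b) * a" by (simp add: ac_simps)
      then have "P^(w-1) dvd (2 * (P - 2) * b) * a" using hab by (simp only:)
      ultimately have adv: "P^(w-1) dvd a" using coprime_dvd_mult_right_iff by blast
      have "P^(w-1) dvd int (k+1)" using kdiv[OF p, of y "w-1" "k+1" "w-1"] y1 adv P_def a_def by simp
      then have ak: "P^w dvd a - int (k+1)" using claimC[OF p, of y "w-1" "k+1"] y1 P_def a_def w by simp
      have q: "P dvd int m * y * b - 1"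
      proof -
        have "[int m * y * b = (-1) * 1 * (-1)] (mod P)"
        proof (intro cong_mult)
          have e: "int m - (-1) = 2 * (int k + 1)" unfolding k by simp
          show "[int m = -1] (mod P)" unfolding cong_iff_dvd_diff e using Pk by (rule dvd_mult)
          show "[y = 1] (mod P)" by (rule y1)
          show "[b = -1] (mod P)" using \<open>P dvd b + 1\<close> by (simp add: cong_iff_dvd_diff)
        qed
        then show ?thesis by (simp add: cong_iff_dvd_diff)
      qed
      have E: "-(int m * uu y m - 1) = 2 * int (k+1) + 2 * (int m * y * b) * a - 2 * int m * a^2"
      proof -
        have bsq: "b^2 = 1 + 2 * y * a * b - a^2" using I(3) by simp
        have mi: "int m = 2 * int k + 1" using k by simp
        have "-(int m * uu y m - 1) = -(int m * (a^2 - b^2) - 1)" using I(2) by simp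
        also have "\<dots> = -(int m * (a^2 - (1 + 2 * y * a * b - a^2)) - 1)" using bsq by simp
        also have "\<dots> = 2 * int (k+1) + 2 * (int m * y * b) * a - 2 * int m * a^2"
          by (simp add: mi algebra_simps power2_eq_square)
        finally show ?thesis .
      qed
      have "coprime (int k) P"
      proof -
        have "[int k = -1] (mod P)" using Pk by (simp add: cong_iff_dvd_diff)
        moreover have "coprime (-1) P" by simp
        ultimately show ?thesis using cong_imp_coprime cong_sym by blast
      qed
      from fin_aux[OF PF(1) PF(4) w2 adv ak q E this]
      have X: "P^w dvd -(int m * uu y m - 1) \<longleftrightarrow> P^w dvd 4 * int (k+1) * int k" .
      have Y: "4 * int (k+1) * int k = 4 * int k * (int k + 1)" by simp
      have "P^w dvd int m * uu y m - 1 \<longleftrightarrow> P^w dvd 4 * int k * (int k + 1)"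
        using X unfolding Y dvd_minus_iff .
      then show ?thesis using Ew Rw by (simp add: P_def)
    qed
  qed
qed

lemma ord_int:
  assumes "p > 1"
  shows "ord (int p) a = ord p (nat (a mod int p))"
proof -
  define b where "b = nat (a mod int p)"
  have ib: "int b = a mod int p" unfolding b_def using assms by simp
  have ab: "[a = int b] (mod int p)" unfolding ib by (simp add: cong_def)
  have cop: "coprime (int p) a \<longleftrightarrow> coprime p b"
  proof -
    have "coprime (int p) a \<longleftrightarrow> coprime (int p) (int b)" using coprime_cong_cong_right[OF ab] .
    also have "\<dots> \<longleftrightarrow> coprime p b" by simp
    finally show ?thesis .
  qed
  have pr: "\<And>d. [a^d = 1] (mod int p) \<longleftrightarrow> [b^d = 1] (mod p)"
  proof -
    fix d
    have "[a^d = int b^d] (mod int p)" using ab by (rule cong_pow)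
    then have X: "[a^d = int (b^d)] (mod int p)" by simp
    then have "[a^d = 1] (mod int p) \<longleftrightarrow> [int (b^d) = 1] (mod int p)"
      using cong_trans cong_sym by blast
    also have "\<dots> \<longleftrightarrow> [b^d = 1] (mod p)" using cong_int_iff[of "b^d" 1 p] by simp
    finally show "[a^d = 1] (mod int p) \<longleftrightarrow> [b^d = 1] (mod p)" .
  qed
  show ?thesis unfolding ord_def b_def[symmetric] cop pr by simp
qed

lemma ord_facts:
  assumes p: "prime p" and c: "coprime (int p) a"
  shows "ord (int p) a > 0 \<and> ord (int p) a < p \<and> [a ^ ord (int p) a = 1] (mod int p)"
proof -
  define b where "b = nat (a mod int p)"
  have p1: "p > 1" using p prime_gt_1_nat by blast
  have ib: "int b = a mod int p" unfolding b_def using p1 by simp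
  have ab: "[a = int b] (mod int p)" unfolding ib by (simp add: cong_def)
  have o: "ord (int p) a = ord p b" unfolding b_def by (rule ord_int[OF p1])
  have cb: "coprime p b"
  proof -
    have "coprime (int p) (int b)" using coprime_cong_cong_right[OF ab] c by simp
    then show ?thesis by simp
  qed
  have "ord p b > 0" using cb by simp
  moreover have "ord p b dvd p - 1" using order_divides_totient[OF cb] totient_prime[OF p] by simp
  then have "ord p b \<le> p - 1" using p1 by (intro dvd_imp_le) auto
  moreover have "[b ^ ord p b = 1] (mod p)" by (rule ord)
  then have "[int b ^ ord p b = 1] (mod int p)" using cong_int_iff[of "b ^ ord p b" 1 p] by simp
  then have "[a ^ ord p b = 1] (mod int p)" using cong_pow[OF ab] cong_trans by blast
  ultimately show ?thesis unfolding o using p1 by auto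
qed

lemma FINAL:
  assumes p: "prime p" and cn: "coprime n p" and N: "\<not> p dvd N" and l: "\<not> p dvd l"
    and m2: "[n ^ (2*(N*l)) = 1] (mod p)"
  shows "[n ^ (2*(N*l)) = 1] (mod p^w) \<longleftrightarrow> [n ^ (2 * ord p (n^2)) = 1] (mod p^w)"
proof -
  define oo where "oo = ord p (n^2)"
  have "[(n^2) ^ (N*l) = 1] (mod p)" using m2 by (simp add: power_mult)
  then have "oo dvd N*l" unfolding oo_def using ord_divides by blast
  then obtain r where r: "N*l = oo * r" by (auto elim: dvdE)
  have pr: "\<not> p dvd r"
  proof
    assume "p dvd r"
    then have "p dvd N*l" unfolding r by simp
    then show False using p N l prime_dvd_mult_iff by blast
  qed
  define z where "z = n^(2*oo)"
  have zr: "n ^ (2*(N*l)) = z^r" unfolding z_def r by (simp add: power_mult)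
  have z1: "[z = 1] (mod p)" unfolding z_def oo_def using ord[of "n^2" p] by (simp add: power_mult)
  show ?thesis unfolding zr z_def[symmetric] oo_def[symmetric]
  proof
    assume "[z = 1] (mod p^w)"
    then show "[z^r = 1] (mod p^w)" using cong_pow by fastforce
  next
    assume h: "[z^r = 1] (mod p^w)"
    define Z where "Z = int z"
    define S where "S = (\<Sum>i<r. Z^i)"
    have "[int (z^r) = int 1] (mod int (p^w))" using h cong_int_iff by blast
    then have hZ: "int p^w dvd Z^r - 1" unfolding Z_def by (simp add: cong_iff_dvd_diff)
    have Z1: "[Z = 1] (mod int p)" using z1 cong_int_iff[of z 1 p] unfolding Z_def by simp
    have "[S = (\<Sum>i<r. 1)] (mod int p)" unfolding S_def
    proof (rule cong_sum)
      fix i show "[Z^i = 1] (mod int p)" using cong_pow[OF Z1, of i] by simp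
    qed
    then have "[S = int r] (mod int p)" by simp
    moreover have "coprime (int r) (int p)"
    proof -
      have "coprime p r" using pr p by (rule prime_imp_coprime[rotated])
      then show ?thesis by (simp add: coprime_commute)
    qed
    ultimately have "coprime S (int p)" using cong_imp_coprime cong_sym by blast
    then have cS: "coprime (int p ^ w) S" by (simp add: coprime_commute)
    have "Z^r - 1 = (Z - 1) * S" unfolding S_def by (rule power_diff_1_eq)
    then have "int p^w dvd (Z - 1) * S" using hZ by simp
    then have "int p^w dvd Z - 1" using coprime_dvd_mult_left_iff[OF cS] by blast
    then have "[int z = int 1] (mod int (p^w))" unfolding Z_def by (simp add: cong_iff_dvd_diff)
    then show "[z = 1] (mod p^w)" using cong_int_iff by blast
  qed
qed

lemma CH:
  assumes "[tt x M = x] (mod Q)"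
  shows "[tt x (M^j) = x] (mod Q) \<and> [chebT' (M^j) x = (chebT' M x)^j] (mod Q)"
proof (induction j)
  case 0 then show ?case by (simp add: chebT'_uu)
next
  case (Suc j)
  have e: "M^Suc j = M * M^j" by simp
  have "tt x (M^Suc j) = tt (tt x (M^j)) M" unfolding e by (rule tt_mult)
  moreover have "[tt (tt x (M^j)) M = tt x M] (mod Q)" using Suc tt_cong by blast
  ultimately have 1: "[tt x (M^Suc j) = x] (mod Q)" using assms cong_trans by metis
  have "chebT' (M^Suc j) x = chebT' M (chebT (M^j) x) * chebT' (M^j) x" unfolding e by (rule chain)
  also have "chebT' M (chebT (M^j) x) = int M * uu (tt x (M^j)) M" by (simp add: chebT'_uu chebT_tt)
  finally have eq: "chebT' (M^Suc j) x = int M * uu (tt x (M^j)) M * chebT' (M^j) x" .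
  have "[int M * uu (tt x (M^j)) M * chebT' (M^j) x = int M * uu x M * (chebT' M x)^j] (mod Q)"
    using Suc uu_cong by (intro cong_mult cong_refl) blast+
  then have "[chebT' (M^Suc j) x = (chebT' M x)^Suc j] (mod Q)"
    unfolding eq by (simp add: chebT'_uu algebra_simps)
  with 1 show ?case by blast
qed

lemma GEN:
  assumes p: "prime p" "odd p" and D: "\<not> int p dvd (x^2 - 1)" and w: "w > 0"
    and hyp: "[tt x m = x] (mod (int p)^w)" and d1: "[int m * uu x m = 1] (mod int p)"
  shows "([int m * uu x m = 1] (mod (int p)^w) \<longleftrightarrow> [int m^2 = 1] (mod (int p)^w)) \<and> [int m^2 = 1] (mod int p)"
proof -
  define P where "P = int p"
  define U where "U = uu x m"
  define T where "T = tt x m"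
  have PP: "prime P" unfolding P_def using p by simp
  have P2: "\<not> P dvd 2"
  proof
    assume "P dvd 2" then have "p dvd 2" unfolding P_def by presburger
    then have "p \<le> 2" by (rule dvd_imp_le) simp
    then have "p = 2" using prime_ge_2_nat[OF p(1)] by simp
    then show False using p(2) by simp
  qed
  have pell': "T^2 - (x^2-1) * U^2 = 1" unfolding T_def U_def by (rule pell)
  have key: "(x^2 - 1) * (U^2 - 1) = (T - x) * (T + x)" using pell'
    by (simp add: algebra_simps power2_eq_square)
  have "P^w dvd T - x" using hyp unfolding T_def P_def by (simp add: cong_iff_dvd_diff)
  then have "P^w dvd (x^2 - 1) * (U^2 - 1)" unfolding key by simp
  moreover have "coprime (P^w) (x^2 - 1)"
  proof -
    have "coprime P (x^2 - 1)" using PP D P_def prime_imp_coprime by blast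
    then show ?thesis by simp
  qed
  ultimately have U2: "P^w dvd U^2 - 1" using coprime_dvd_mult_right_iff by blast
  have id1: "int m^2 - 1 = (int m * U - 1) * (int m * U + 1) - int m^2 * (U^2 - 1)"
    by (simp add: algebra_simps power2_eq_square)
  have id2: "(int m * U - 1) * (int m * U + 1) = int m^2 * (U^2 - 1) + (int m^2 - 1)"
    by (simp add: algebra_simps power2_eq_square)
  have dP: "P dvd int m * U - 1" using d1 unfolding U_def P_def by (simp add: cong_iff_dvd_diff)
  have "P dvd P^w" using w by simp
  then have U2P: "P dvd U^2 - 1" using U2 by (rule dvd_trans)
  have m2P: "P dvd int m^2 - 1" unfolding id1 using dvd_mult2[OF dP] dvd_mult[OF U2P] by (rule dvd_diff)
  have cplus: "coprime (P^w) (int m * U + 1)"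
  proof -
    have "[int m * U + 1 = 2] (mod P)" using dP by (simp add: cong_iff_dvd_diff algebra_simps)
    moreover have "coprime 2 P" using P2 PP prime_imp_coprime coprime_commute by blast
    ultimately have "coprime (int m * U + 1) P" using cong_imp_coprime cong_sym by blast
    then show ?thesis by (simp add: coprime_commute)
  qed
  have "P^w dvd int m * U - 1 \<longleftrightarrow> P^w dvd int m^2 - 1"
  proof
    assume "P^w dvd int m * U - 1"
    then show "P^w dvd int m^2 - 1" unfolding id1 using dvd_mult2 dvd_mult[OF U2] by (blast intro: dvd_diff)
  next
    assume "P^w dvd int m^2 - 1"
    then have "P^w dvd (int m * U - 1) * (int m * U + 1)" unfolding id2 using dvd_mult[OF U2] by (blast intro: dvd_add)
    then show "P^w dvd int m * U - 1" using coprime_dvd_mult_left_iff[OF cplus] by blast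
  qed
  then show ?thesis using m2P unfolding P_def U_def by (simp add: cong_iff_dvd_diff)
qed

lemma fermat_int1:
  assumes p: "prime p" and d: "\<not> int p dvd y"
  shows "[y^(p-1) = 1] (mod int p)"
proof -
  define b where "b = nat (y mod int p)"
  have p0: "p > 0" using p prime_gt_0_nat by blast
  have ib: "int b = y mod int p" unfolding b_def using p0 by simp
  have yb: "[y = int b] (mod int p)" unfolding ib by (simp add: cong_def)
  have "\<not> p dvd b"
  proof
    assume "p dvd b"
    then have "int p dvd int b" by simp
    then have "int p dvd y" using yb cong_dvd_iff by blast
    then show False using d by simp
  qed
  then have "[b^(p-1) = 1] (mod p)" using fermat_theorem[OF p] by blast
  then have "[int b^(p-1) = 1] (mod int p)" using cong_int_iff[of "b^(p-1)" 1 p] by simp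
  moreover have "[y^(p-1) = int b^(p-1)] (mod int p)" using yb by (rule cong_pow)
  ultimately show ?thesis using cong_trans by blast
qed

lemma fermat_int:
  assumes p: "prime p"
  shows "[y^p = y] (mod int p)"
proof (cases "int p dvd y")
  case True
  have p0: "p > 0" using p prime_gt_0_nat by blast
  have "y^p = y * y^(p-1)" using p0 by (simp add: power_Suc[symmetric])
  then have "int p dvd y^p" using True by (simp add: dvd_mult2)
  then show ?thesis using True by (simp add: cong_iff_dvd_diff)
next
  case False
  have p0: "p > 0" using p prime_gt_0_nat by blast
  have "[y^(p-1) * y = 1 * y] (mod int p)" using fermat_int1[OF p False] by (rule cong_mult) simp
  moreover have "y^(p-1) * y = y^p" using p0 by (simp add: power_Suc2[symmetric])
  ultimately show ?thesis by simp
qed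

lemma periodic:
  assumes t: "[tt x r = 1] (mod Q)" and u: "[uu x r = 0] (mod Q)"
  shows "[tt x (q * r + k) = tt x k] (mod Q) \<and> [uu x (q * r + k) = uu x k] (mod Q)"
proof (induction q)
  case 0 then show ?case by simp
next
  case (Suc q)
  have e: "Suc q * r + k = r + (q * r + k)" by simp
  have "[tt x r * tt x (q*r+k) + (x^2-1) * uu x r * uu x (q*r+k) = 1 * tt x k + (x^2-1) * 0 * uu x k] (mod Q)"
    using t u Suc by (intro cong_add cong_mult cong_refl) blast+
  moreover have "[tt x r * uu x (q*r+k) + uu x r * tt x (q*r+k) = 1 * uu x k + 0 * tt x k] (mod Q)"
    using t u Suc by (intro cong_add cong_mult cong_refl) blast+
  ultimately show ?case unfolding e tt_add uu_add by simp
qed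

lemma PERIOD:
  assumes p: "prime p" "p > 3" and cn: "coprime n (p^2 - 1)" and D: "\<not> int p dvd (x^2 - 1)"
  shows "\<exists>N0>0. N0 < p \<and> [tt x (n^N0) = x] (mod int p)"
proof -
  define P where "P = int p"
  define D where "D = x^2 - 1"
  define h where "h = (p - 1) div 2"
  define c where "c = D^h"
  have oddp: "odd p" using p by (intro prime_odd_nat) auto
  have fr: "[tt x p = x^p] (mod P)" "[uu x p = c] (mod P)"
    using frob[OF p(1) oddp, of x] unfolding P_def c_def D_def h_def by auto
  have tp: "[tt x p = x] (mod P)" using fr(1) fermat_int[OF p(1), of x] unfolding P_def using cong_trans by blast
  have "2 * h = p - 1" unfolding h_def using oddp by simp
  then have "c^2 = D^(p-1)" unfolding c_def by (simp add: power_mult[symmetric] mult.commute)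
  moreover have "[D^(p-1) = 1] (mod P)" using fermat_int1[OF p(1)] D unfolding P_def D_def by blast
  ultimately have "[c^2 = 1] (mod P)" by simp
  then have "P dvd c^2 - 1" by (simp add: cong_iff_dvd_diff)
  moreover have "c^2 - 1 = (c - 1) * (c + 1)" by (simp add: algebra_simps power2_eq_square)
  ultimately have "P dvd (c - 1) * (c + 1)" by simp
  then have "P dvd c - 1 \<or> P dvd c + 1" using p(1) unfolding P_def by (simp add: prime_dvd_mult_iff)
  then have cc: "[c = 1] (mod P) \<or> [c = -1] (mod P)" unfolding cong_iff_dvd_diff by simp
  have up: "[uu x p = 1] (mod P) \<or> [uu x p = -1] (mod P)" using cc fr(2) cong_trans by blast
  have xD: "x^2 - D = 1" unfolding D_def by simp
  have pp: "p^2 - 1 = (p - 1) * (p + 1)" using p by (cases p) (simp_all add: power2_eq_square algebra_simps)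
  have "\<exists>r. r > 1 \<and> r dvd p^2 - 1 \<and> totient r < p \<and> [tt x r = 1] (mod P) \<and> [uu x r = 0] (mod P)"
  proof (cases "[uu x p = 1] (mod P)")
    case True
    define r where "r = p - 1"
    have pr: "p = r + 1" unfolding r_def using p by simp
    have e1: "tt x p = tt x r * x + D * uu x r" unfolding pr tt_add D_def by simp
    have e2: "uu x p = tt x r + uu x r * x" unfolding pr uu_add by simp
    have "x * tt x p - D * uu x p = tt x r * (x^2 - D)" unfolding e1 e2
      by (simp add: algebra_simps power2_eq_square)
    then have "tt x r = x * tt x p - D * uu x p" using xD by simp
    moreover have "[x * tt x p - D * uu x p = x * x - D * 1] (mod P)"
      using tp True by (intro cong_diff cong_mult cong_refl)
    ultimately have t: "[tt x r = 1] (mod P)" using xD by (simp add: power2_eq_square)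
    have "x * uu x p - tt x p = uu x r * (x^2 - D)" unfolding e1 e2
      by (simp add: algebra_simps power2_eq_square)
    then have "uu x r = x * uu x p - tt x p" using xD by simp
    moreover have "[x * uu x p - tt x p = x * 1 - x] (mod P)"
      using tp True by (intro cong_diff cong_mult cong_refl)
    ultimately have u: "[uu x r = 0] (mod P)" by simp
    have "r > 1" unfolding r_def using p by simp
    moreover have "r dvd p^2 - 1" unfolding pp r_def by simp
    moreover have "totient r < p" using totient_le[of r] unfolding r_def using p by simp
    ultimately show ?thesis using t u by blast
  next
    case False
    then have Tm: "[uu x p = -1] (mod P)" using up by blast
    define r where "r = p + 1"
    have e1: "tt x r = tt x p * x + D * uu x p" unfolding r_def tt_add D_def by simp
    have e2: "uu x r = tt x p + uu x p * x" unfolding r_def uu_add by simp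
    have "[tt x p * x + D * uu x p = x * x + D * (-1)] (mod P)"
      using tp Tm by (intro cong_add cong_mult cong_refl)
    then have t: "[tt x r = 1] (mod P)" unfolding e1 using xD by (simp add: power2_eq_square)
    have "[tt x p + uu x p * x = x + (-1) * x] (mod P)"
      using tp Tm by (intro cong_add cong_mult cong_refl)
    then have u: "[uu x r = 0] (mod P)" unfolding e2 by simp
    have "r > 1" unfolding r_def using p by simp
    moreover have "r dvd p^2 - 1" unfolding pp r_def by (rule dvd_triv_right)
    moreover have "totient r < p"
    proof -
      have "totient r < r" using totient_less[of r] unfolding r_def using p by simp
      moreover have "totient r \<noteq> p"
      proof
        assume "totient r = p"
        then have "totient r = r - 1" unfolding r_def by simp
        then have "prime r" using totient_imp_prime unfolding r_def by simp
        moreover have "even r" unfolding r_def using oddp by simp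
        ultimately have "r = 2"
        proof -
          assume pr: "prime r" and er: "even r"
          show "r = 2"
          proof (rule ccontr)
            assume "r \<noteq> 2"
            then have "r > 2" using prime_ge_2_nat[OF pr] by simp
            then have "odd r" using prime_odd_nat[OF pr] by simp
            then show False using er by simp
          qed
        qed
        then show False unfolding r_def using p by simp
      qed
      ultimately show ?thesis unfolding r_def by simp
    qed
    ultimately show ?thesis using t u by blast
  qed
  then obtain r where r: "r > 1" "r dvd p^2 - 1" "totient r < p" "[tt x r = 1] (mod P)" "[uu x r = 0] (mod P)"
    by blast
  have cr: "coprime n r" using coprime_divisors[OF dvd_refl r(2) cn] .
  define e0 where "e0 = totient r"
  have "[n^e0 = 1] (mod r)" unfolding e0_def using euler_theorem[OF cr] .
  then have "n^e0 mod r = 1" using r(1) by (simp add: cong_def)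
  moreover have "n^e0 = (n^e0 div r) * r + n^e0 mod r" by simp
  ultimately have ne: "n^e0 = (n^e0 div r) * r + 1" by simp
  have "[tt x ((n^e0 div r) * r + 1) = tt x 1] (mod P)" using periodic[OF r(4) r(5)] by blast
  then have "[tt x (n^e0) = x] (mod P)" using ne by simp
  moreover have "e0 > 0" unfolding e0_def using r(1) by simp
  ultimately show ?thesis using r(3) unfolding e0_def P_def by blast
qed

lemma assemble:
  assumes p: "prime p" and cn: "coprime n p"
    and key: "Nx > 0 \<and> \<not> p dvd Nx \<and> \<not> p dvd lx \<and> [int (n^(Nx*lx))^2 = 1] (mod int p) \<and>
              (L \<longleftrightarrow> [int (n^(Nx*lx))^2 = 1] (mod (int p)^w))"
  shows "L \<longleftrightarrow> [n ^ (2 * ord p (n\<^sup>2)) = 1] (mod p ^ w)"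
proof -
  have e: "\<And>Q. [int (n^(Nx*lx))^2 = 1] (mod int Q) \<longleftrightarrow> [n^(2*(Nx*lx)) = 1] (mod Q)"
  proof -
    fix Q
    have "int (n^(Nx*lx))^2 = int (n^(2*(Nx*lx)))" by (simp add: power_mult[symmetric] mult.commute)
    then show "[int (n^(Nx*lx))^2 = 1] (mod int Q) \<longleftrightarrow> [n^(2*(Nx*lx)) = 1] (mod Q)"
      using cong_int_iff[of "n^(2*(Nx*lx))" 1 Q] by simp
  qed
  have m1: "[n^(2*(Nx*lx)) = 1] (mod p)" using key e by blast
  have K1: "L \<longleftrightarrow> [int (n^(Nx*lx))^2 = 1] (mod (int p)^w)" using key by blast
  have pw: "(int p)^w = int (p^w)" by simp
  have K2: "L \<longleftrightarrow> [int (n^(Nx*lx))^2 = 1] (mod int (p^w))" using K1 by (simp only: pw)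
  then have "L \<longleftrightarrow> [n^(2*(Nx*lx)) = 1] (mod p^w)" using e by blast
  also have "\<dots> \<longleftrightarrow> [n ^ (2 * ord p (n\<^sup>2)) = 1] (mod p ^ w)"
    using FINAL[OF p cn _ _ m1] key by blast
  finally show ?thesis .
qed

lemma case1:
  fixes p n w :: nat and x :: int
  assumes p: "prime p" "p > 3" and oddp: "odd p" and oddn: "odd n" and cn: "coprime n p" and cn2: "coprime n (p^2 - 1)"
    and cpn: "coprime (int p) (int n)" and w: "w > 0"
    and Nx_def: "Nx = cheb_period p n x" and lx_def: "lx = ord (int p) (chebT' (n ^ Nx) x)"
    and hyp: "[chebT (n ^ (Nx * lx)) x = x] (mod (int p) ^ w)"
    and 1: "x = 1"
  shows "Nx > 0 \<and> \<not> p dvd Nx \<and> \<not> p dvd lx \<and> [int (n^(Nx*lx))^2 = 1] (mod int p) \<and>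
      ([chebT' (n ^ (Nx * lx)) x = 1] (mod (int p) ^ w) \<longleftrightarrow> [int (n^(Nx*lx))^2 = 1] (mod (int p)^w))"
proof -
  have T1: "\<And>k. chebT k x = 1" unfolding 1 chebT_tt using tt_uu_one by simp
  have N1: "Nx = 1" unfolding Nx_def cheb_period_def
    by (rule Least_equality) (auto simp: 1 chebT_tt tt_uu_one)
  define a where "a = chebT' n x"
  have a: "a = int n * int n" unfolding a_def chebT'_uu 1 using tt_uu_one by simp
  have ca: "coprime (int p) a" unfolding a using cpn by simp
  have lx: "lx = ord (int p) a" unfolding lx_def a_def N1 by simp
  note of = ord_facts[OF p(1) ca, folded lx]
  have m2: "int (n^(Nx*lx))^2 = a^lx" unfolding N1 a by (simp add: power_mult_distrib power2_eq_square)
  have "chebT' (n ^ (Nx * lx)) x = int (n^(Nx*lx))^2"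
    unfolding chebT'_uu 1 using tt_uu_one by (simp add: power2_eq_square)
  moreover have "\<not> p dvd lx" using of by (auto dest: dvd_imp_le)
  ultimately show ?thesis using of N1 m2 p by simp
qed

lemma case2:
  fixes p n w :: nat and x :: int
  assumes p: "prime p" "p > 3" and oddp: "odd p" and oddn: "odd n" and cn: "coprime n p" and cn2: "coprime n (p^2 - 1)"
    and cpn: "coprime (int p) (int n)" and w: "w > 0"
    and Nx_def: "Nx = cheb_period p n x" and lx_def: "lx = ord (int p) (chebT' (n ^ Nx) x)"
    and hyp: "[chebT (n ^ (Nx * lx)) x = x] (mod (int p) ^ w)"
    and 2: "x = int p - 1"
  shows "Nx > 0 \<and> \<not> p dvd Nx \<and> \<not> p dvd lx \<and> [int (n^(Nx*lx))^2 = 1] (mod int p) \<and>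
      ([chebT' (n ^ (Nx * lx)) x = 1] (mod (int p) ^ w) \<longleftrightarrow> [int (n^(Nx*lx))^2 = 1] (mod (int p)^w))"
proof -
  define y where "y = 1 - int p"
  have xy: "x = - y" unfolding 2 y_def by simp
  have xm1: "[x = -1] (mod int p)" unfolding 2 by (simp add: cong_iff_dvd_diff)
  have Tn: "[chebT n x = x] (mod int p)"
  proof -
    have "[chebT n x = tt (-1) n] (mod int p)" unfolding chebT_tt by (rule tt_cong[OF xm1])
    moreover have "tt (-1) n = -1" using tt_uu_neg[of 1 n] tt_uu_one[of n] oddn by simp
    ultimately have "[chebT n x = -1] (mod int p)" by simp
    then show ?thesis using cong_trans[OF _ cong_sym[OF xm1]] by blast
  qed
  have N1: "Nx = 1" unfolding Nx_def cheb_period_def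
    by (rule Least_equality) (use Tn in auto)
  define a where "a = chebT' n x"
  have aeq: "[a = int n * int n] (mod int p)"
  proof -
    have "[a = int n * uu (-1) n] (mod int p)" unfolding a_def chebT'_uu
      by (intro cong_mult cong_refl uu_cong xm1)
    moreover have "uu (-1) n = int n" using tt_uu_neg[of 1 n] tt_uu_one[of n] oddn by simp
    ultimately show ?thesis by simp
  qed
  have ca: "coprime (int p) a" using cong_imp_coprime[OF cong_sym[OF aeq]] cpn
    by (simp add: coprime_commute)
  have lx: "lx = ord (int p) a" unfolding lx_def a_def N1 by simp
  note of = ord_facts[OF p(1) ca, folded lx]
  define m where "m = n^lx"
  have mm: "n^(Nx*lx) = m" unfolding N1 m_def by simp
  have oddm: "odd m" unfolding m_def using oddn by simp
  have "[int m^2 = a^lx] (mod int p)"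
  proof -
    have "[a^lx = (int n * int n)^lx] (mod int p)" using aeq by (rule cong_pow)
    moreover have "(int n * int n)^lx = int m^2" unfolding m_def by (simp add: power_mult_distrib power2_eq_square)
    ultimately show ?thesis using cong_sym by simp
  qed
  then have m2: "[int m^2 = 1] (mod int p)" using of cong_trans by blast
  have Tn': "[tt x n = x] (mod int p)" using Tn unfolding chebT_tt .
  have "[chebT' (n^lx) x = (chebT' n x)^lx] (mod int p)" using CH[OF Tn'] by blast
  then have "[chebT' m x = a^lx] (mod int p)" unfolding m_def a_def .
  then have "[chebT' m x = 1] (mod int p)" using of cong_trans by blast
  then have d1x: "[int m * uu x m = 1] (mod int p)" unfolding chebT'_uu .
  have ux: "uu x m = uu y m" unfolding xy using tt_uu_neg[of y m] oddm by simp
  have tx: "tt x m = - tt y m" unfolding xy using tt_uu_neg[of y m] oddm by simp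
  have hy: "[tt y m = y] (mod (int p)^w)"
  proof -
    have h1: "[tt x m = x] (mod (int p)^w)" using hyp unfolding mm chebT_tt .
    have h2: "[- tt y m = x] (mod (int p)^w)" using h1 unfolding tx .
    have "[- tt y m = - y] (mod (int p)^w)" using h2 unfolding xy .
    then show ?thesis by (simp add: cong_minus_minus_iff)
  qed
  have d1: "[int m * uu y m = 1] (mod int p)" using d1x ux by simp
  have L: "[chebT' (n ^ (Nx * lx)) x = 1] (mod (int p) ^ w) \<longleftrightarrow> [int m ^ 2 = 1] (mod (int p)^w)"
    unfolding mm chebT'_uu ux using negy[OF p oddm w y_def hy d1] .
  have "\<not> p dvd lx" using of by (auto dest: dvd_imp_le)
  then show ?thesis using N1 m2 L mm p by simp
qed

lemma case3:
  fixes p n w :: nat and x :: int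
  assumes p: "prime p" "p > 3" and oddp: "odd p" and oddn: "odd n" and cn: "coprime n p" and cn2: "coprime n (p^2 - 1)"
    and cpn: "coprime (int p) (int n)" and w: "w > 0"
    and Nx_def: "Nx = cheb_period p n x" and lx_def: "lx = ord (int p) (chebT' (n ^ Nx) x)"
    and hyp: "[chebT (n ^ (Nx * lx)) x = x] (mod (int p) ^ w)"
    and 3: "\<not> int p dvd (x^2 - 1)"
  shows "Nx > 0 \<and> \<not> p dvd Nx \<and> \<not> p dvd lx \<and> [int (n^(Nx*lx))^2 = 1] (mod int p) \<and>
      ([chebT' (n ^ (Nx * lx)) x = 1] (mod (int p) ^ w) \<longleftrightarrow> [int (n^(Nx*lx))^2 = 1] (mod (int p)^w))"
proof -
  obtain N0 where N0: "N0 > 0" "N0 < p" "[tt x (n^N0) = x] (mod int p)"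
    using PERIOD[OF p cn2 3] by blast
  have ex: "N0 > 0 \<and> [chebT (n ^ N0) x = x] (mod int p)" using N0 by (simp add: chebT_tt)
  have NxP: "Nx > 0 \<and> [chebT (n ^ Nx) x = x] (mod int p)"
    unfolding Nx_def cheb_period_def by (rule LeastI[of _ N0]) (rule ex)
  have "Nx \<le> N0" unfolding Nx_def cheb_period_def by (rule Least_le) (rule ex)
  then have NxP2: "\<not> p dvd Nx" using NxP N0(2) by (auto dest: dvd_imp_le)
  define M where "M = n^Nx"
  have TM: "[tt x M = x] (mod int p)" using NxP unfolding M_def chebT_tt by simp
  define a where "a = chebT' M x"
  have ca: "coprime (int p) a"
  proof -
    have c1: "coprime (int p) (int M)" unfolding M_def using cpn by simp
    have c2: "coprime (int p) (uu x M)"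
    proof (rule ccontr)
      assume "\<not> coprime (int p) (uu x M)"
      moreover have "prime (int p)" using p by simp
      ultimately have dv: "int p dvd uu x M" using prime_imp_coprime by blast
      have pe: "tt x M ^ 2 - (x^2 - 1) * uu x M ^2 = 1" by (rule pell)
      have "[tt x M ^ 2 = x ^ 2] (mod int p)" using TM by (rule cong_pow)
      moreover have "int p dvd (x^2 - 1) * uu x M ^2" using dv by (simp add: power2_eq_square)
      moreover have "x^2 - 1 = (x^2 - tt x M ^ 2) + (x^2 - 1) * uu x M ^2"
        using pe by (simp add: algebra_simps)
      ultimately have "int p dvd x^2 - 1"
        by (metis dvd_add cong_iff_dvd_diff cong_sym)
      then show False using 3 by simp
    qed
    show ?thesis unfolding a_def chebT'_uu using c1 c2 by simp
  qed
  have lx: "lx = ord (int p) a" unfolding lx_def a_def M_def by simp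
  note of = ord_facts[OF p(1) ca, folded lx]
  define m where "m = M^lx"
  have mm: "n^(Nx*lx) = m" unfolding m_def M_def by (simp add: power_mult)
  have "[chebT' (M^lx) x = (chebT' M x)^lx] (mod int p)" using CH[OF TM] by blast
  then have "[chebT' m x = a^lx] (mod int p)" unfolding m_def a_def .
  then have "[chebT' m x = 1] (mod int p)" using of cong_trans by blast
  then have d1: "[int m * uu x m = 1] (mod int p)" unfolding chebT'_uu .
  have hy: "[tt x m = x] (mod (int p)^w)" using hyp unfolding mm chebT_tt .
  note G = GEN[OF p(1) oddp 3 w hy d1]
  have "\<not> p dvd lx" using of by (auto dest: dvd_imp_le)
  then show ?thesis using NxP NxP2 G mm unfolding chebT'_uu by simp
qed

theorem lemma13:
  fixes p n w :: nat and x :: int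
  assumes "prime p" and "p > 3" and "n > 1"
    and "gcd n p = 1" and "gcd n (p\<^sup>2 - 1) = 1"
    and "0 \<le> x" and "x \<le> int p - 1" and "w > 0"
  defines "Nx \<equiv> cheb_period p n x"
  defines "lx \<equiv> ord (int p) (chebT' (n ^ Nx) x)"
  assumes "[chebT (n ^ (Nx * lx)) x = x] (mod (int p) ^ w)"
  shows "[chebT' (n ^ (Nx * lx)) x = 1] (mod (int p) ^ w) \<longleftrightarrow>
         [n ^ (2 * ord p (n\<^sup>2)) = 1] (mod p ^ w)"
proof -
  note p = assms(1) assms(2)
  define P where "P = int p"
  have oddp: "odd p" using p by (intro prime_odd_nat) auto
  have cn: "coprime n p" using assms(4) coprime_iff_gcd_eq_1 by blast
  have cn2: "coprime n (p^2 - 1)" using assms(5) coprime_iff_gcd_eq_1 by blast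
  have oddn: "odd n"
  proof
    assume "even n"
    moreover have "even (p^2 - 1)"
    proof -
      have "odd (p^2)" using oddp by simp
      then obtain q where q: "p^2 = 2 * q + 1" by (rule oddE)
      then have "p^2 - 1 = 2 * q" by simp
      then show ?thesis by simp
    qed
    ultimately have "2 dvd gcd n (p^2 - 1)" by (rule gcd_greatest)
    then have "(2::nat) dvd 1" by (simp only: assms(5))
    then show False by simp
  qed
  have cpn: "coprime (int p) (int n)" using cn by (simp add: coprime_commute)
  have hyp: "[chebT (n ^ (Nx * lx)) x = x] (mod (int p) ^ w)" by (rule assms(11))
  have key: "Nx > 0 \<and> \<not> p dvd Nx \<and> \<not> p dvd lx \<and> [int (n^(Nx*lx))^2 = 1] (mod int p) \<and>
      ([chebT' (n ^ (Nx * lx)) x = 1] (mod (int p) ^ w) \<longleftrightarrow> [int (n^(Nx*lx))^2 = 1] (mod (int p)^w))"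
  proof -
    consider "x = 1" | "x = int p - 1" | "\<not> int p dvd (x^2 - 1)"
    proof -
      have "x = 1 \<or> x = int p - 1 \<or> \<not> int p dvd (x^2 - 1)"
      proof (rule ccontr)
        assume "\<not> ?thesis"
        then have x1: "x \<noteq> 1" and x2: "x \<noteq> int p - 1" and d0: "int p dvd (x^2 - 1)"
          by blast+
        have "x^2 - 1 = (x - 1) * (x + 1)" by (simp add: algebra_simps power2_eq_square)
        then have d: "int p dvd (x - 1) * (x + 1)" using d0 by simp
        have "prime (int p)" using p by simp
        then have "int p dvd x - 1 \<or> int p dvd x + 1" using d prime_dvd_mult_iff by blast
        then show False
        proof
          assume "int p dvd x - 1"
          moreover have "x - 1 \<noteq> 0" using x1 by simp
          ultimately have "\<bar>int p\<bar> \<le> \<bar>x - 1\<bar>" using dvd_imp_le_int by blast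
          then show False using assms(6,7) p by simp
        next
          assume "int p dvd x + 1"
          moreover have "x + 1 \<noteq> 0" using assms(6) by simp
          ultimately have "\<bar>int p\<bar> \<le> \<bar>x + 1\<bar>" using dvd_imp_le_int by blast
          then show False using assms(6,7) x2 by simp
        qed
      qed
      then show ?thesis using that by blast
    qed
    then show ?thesis
    proof cases
      case 1 show ?thesis using case1[OF p oddp oddn cn cn2 cpn assms(8) Nx_def[THEN meta_eq_to_obj_eq] lx_def[THEN meta_eq_to_obj_eq] hyp 1] .
    next
      case 2 show ?thesis using case2[OF p oddp oddn cn cn2 cpn assms(8) Nx_def[THEN meta_eq_to_obj_eq] lx_def[THEN meta_eq_to_obj_eq] hyp 2] .
    next
      case 3 show ?thesis using case3[OF p oddp oddn cn cn2 cpn assms(8) Nx_def[THEN meta_eq_to_obj_eq] lx_def[THEN meta_eq_to_obj_eq] hyp 3] .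
    qed
  qed
  show ?thesis by (rule assemble[OF p(1) cn key])
qed

end
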